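(* For $i\ge 1$ let $P_i$ denote a rectangle of dimensions $\frac{1}{i}\times\frac{1}{i+1}$ (so $\sum_{i=1}^{\infty}\frac{1}{i(i+1)}=1$). Let $n\ge 1000$ be an integer and suppose that the rectangles $P_1,\dots,P_{n-1}$ can be packed into the unit square. Then all the rectangles $P_1,P_2,P_3,\dots$ can be packed into the square of side length $1+\frac{1}{n}$. Moreover, the region actually used by this packing (the unit square together with the additional strips) has area less than $1+\frac{2}{n}\left(\ln 2+\frac{1}{2n}\right)$.
   Context: A packing of rectangles into a container means placing the rectangles (translated, and possibly rotated by $90^\circ$) inside the container so that they have pairwise disjoint interiors. *)

theory Defs
  imports "HOL-Analysis.Analysis"
begin

definition placed_rect :: "real \<Rightarrow> real \<Rightarrow> real \<times> real \<Rightarrow> bool \<Rightarrow> (real \<times> real) set" where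
  "placed_rect w h p r = (if r then cbox p (p + (h, w)) else cbox p (p + (w, h)))"

definition P_rect :: "nat \<Rightarrow> real \<times> real \<Rightarrow> bool \<Rightarrow> (real \<times> real) set" where
  "P_rect i p r = placed_rect (1 / real i) (1 / real (i + 1)) p r"

definition packs :: "nat set \<Rightarrow> (real \<times> real) set \<Rightarrow> (nat \<Rightarrow> real \<times> real) \<Rightarrow> (nat \<Rightarrow> bool) \<Rightarrow> bool" where
  "packs I C pos rot \<longleftrightarrow>
     (\<forall>i\<in>I. P_rect i (pos i) (rot i) \<subseteq> C) \<and>
     (\<forall>i\<in>I. \<forall>j\<in>I. i \<noteq> j \<longrightarrow>
        interior (P_rect i (pos i) (rot i)) \<inter> interior (P_rect j (pos j) (rot j)) = {})"

definition packable :: "nat set \<Rightarrow> (real \<times> real) set \<Rightarrow> bool" where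
  "packable I C \<longleftrightarrow> (\<exists>pos rot. packs I C pos rot)"

definition square :: "real \<Rightarrow> (real \<times> real) set" where
  "square s = cbox (0, 0) (s, s)"

end

theory Submission
  imports Defs
begin

definition Hs :: "nat \<Rightarrow> nat \<Rightarrow> real" where
  "Hs a b = (\<Sum>j=a..<b. 1 / (real j + 1))"

lemma Hs_nonneg: "0 \<le> Hs a b"
  unfolding Hs_def by (intro sum_nonneg) auto

lemma Hs_mono: "b \<le> c \<Longrightarrow> Hs a b \<le> Hs a c"
  unfolding Hs_def by (intro sum_mono2) auto

lemma Hs_Suc: "a \<le> i \<Longrightarrow> Hs a (Suc i) = Hs a i + 1 / (real i + 1)"
  unfolding Hs_def by simp

lemma inv_le_ln: "0 < b \<Longrightarrow> 1 / (real b + 1) \<le> ln ((real b + 1) / real b)"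
proof -
  assume b: "0 < b"
  have "ln (real b / (real b + 1)) \<le> real b / (real b + 1) - 1"
    using b by (intro ln_le_minus_one) auto
  also have "\<dots> = - (1 / (real b + 1))" by (simp add: field_simps)
  finally have "ln (real b / (real b + 1)) \<le> - (1 / (real b + 1))" .
  moreover have "ln (real b / (real b + 1)) = - ln ((real b + 1) / real b)"
    using b by (simp add: ln_div)
  ultimately show ?thesis by simp
qed

lemma Hs_ln: assumes "0 < a" "a \<le> b" shows "Hs a b \<le> ln (real b / real a)"
  using assms(2)
proof (induction b rule: dec_induct)
  case base
  then show ?case by (simp add: Hs_def)
next
  case (step b)
  have "Hs a (Suc b) = Hs a b + 1 / (real b + 1)" using step by (simp add: Hs_Suc)
  also have "\<dots> \<le> ln (real b / real a) + ln ((real b + 1) / real b)"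
    using step inv_le_ln[of b] assms by auto
  also have "\<dots> = ln (real (Suc b) / real a)"
    using step assms by (simp add: ln_div add.commute)
  finally show ?case .
qed

lemma Hs_le_ln2: "0 < a \<Longrightarrow> a \<le> i \<Longrightarrow> i < 2 * a \<Longrightarrow> Hs a (Suc i) \<le> ln 2"
proof -
  assume a: "0 < a" "a \<le> i" "i < 2 * a"
  have "Hs a (Suc i) \<le> ln (real (Suc i) / real a)" using a by (intro Hs_ln) auto
  also have "\<dots> \<le> ln 2"
    using a by (subst ln_le_cancel_iff) (auto simp: field_simps)
  finally show ?thesis .
qed

definition lev :: "nat \<Rightarrow> nat \<Rightarrow> nat" where
  "lev n i = (LEAST k. i < 2 ^ (k + 1) * n)"

lemma lev_props:
  assumes "1 \<le> n" "2 * n \<le> i"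
  shows "1 \<le> lev n i" "2 ^ lev n i * n \<le> i" "i < 2 ^ (lev n i + 1) * n"
proof -
  have ex: "i < 2 ^ (i + 1) * n"
  proof -
    have "i < 2 ^ (i+1)" by (induction i) auto
    also have "\<dots> \<le> 2 ^ (i + 1) * n" using assms by simp
    finally show ?thesis .
  qed
  show 3: "i < 2 ^ (lev n i + 1) * n" unfolding lev_def by (rule LeastI[of _ i]) (rule ex)
  have min: "\<And>k. k < lev n i \<Longrightarrow> \<not> i < 2 ^ (k + 1) * n"
    unfolding lev_def by (rule not_less_Least)
  show 1: "1 \<le> lev n i"
  proof (rule ccontr)
    assume "\<not> 1 \<le> lev n i"
    then have "lev n i = 0" by simp
    with 3 assms show False by simp
  qed
  then obtain k where k: "lev n i = Suc k" by (cases "lev n i") auto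
  with min[of k] show "2 ^ lev n i * n \<le> i" by simp
qed

definition newpos :: "nat \<Rightarrow> nat \<Rightarrow> real \<times> real" where
  "newpos n i = (if i < 2 * n then (1, Hs n i)
     else (Hs (2 ^ lev n i * n) i, 1 + 1 / real n - 2 / (2 ^ lev n i * real n)))"

definition newrot :: "nat \<Rightarrow> nat \<Rightarrow> bool" where
  "newrot n i = (\<not> i < 2 * n)"

lemma rect_col0:
  assumes "n \<le> i" "i < 2 * n"
  shows "P_rect i (newpos n i) (newrot n i) = cbox (1, Hs n i) (1 + 1 / real i, Hs n (Suc i))"
  using assms by (simp add: P_rect_def placed_rect_def newpos_def newrot_def Hs_Suc add.commute)

lemma rect_lev:
  assumes "2 * n \<le> i"
  defines "m \<equiv> 2 ^ lev n i * n"
  defines "y \<equiv> 1 + 1 / real n - 2 / (2 ^ lev n i * real n)"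
  shows "P_rect i (newpos n i) (newrot n i) = cbox (Hs m i, y) (Hs m (Suc i), y + 1 / real i)"
proof -
  have "m \<le> i" using lev_props(2)[of n i] assms by (cases "n = 0") (auto simp: m_def)
  then show ?thesis
    using assms by (simp add: P_rect_def placed_rect_def newpos_def newrot_def Hs_Suc m_def y_def add.commute)
qed

lemma box_disj:
  "b1 \<le> c1 \<or> d1 \<le> a1 \<or> b2 \<le> c2 \<or> d2 \<le> a2 \<Longrightarrow>
   interior (cbox (a1::real,a2::real) (b1,b2)) \<inter> interior (cbox (c1,c2) (d1,d2)) = {}"
  by (auto simp: mem_box Basis_prod_def)

lemma box_disj':
  "b1 \<le> c1 \<or> d1 \<le> a1 \<or> b2 \<le> c2 \<or> d2 \<le> a2 \<Longrightarrow>
   box (a1::real,a2::real) (b1,b2) \<inter> box (c1,c2) (d1,d2) = {}"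
  by (auto simp: mem_box Basis_prod_def)

lemma cbox_sub: "a1 \<le> c1 \<Longrightarrow> d1 \<le> b1 \<Longrightarrow> a2 \<le> c2 \<Longrightarrow> d2 \<le> b2 \<Longrightarrow>
   cbox (c1::real,c2::real) (d1,d2) \<subseteq> cbox (a1,a2) (b1,b2)"
  by (auto simp: cbox_Pair_eq)

lemma y_ge1:
  assumes "1 \<le> n" "1 \<le> k"
  shows "1 \<le> 1 + 1 / real n - 2 / (2 ^ k * real n)"
proof -
  have "(2::real) \<le> 2 ^ k" using assms(2) by (metis power_increasing power_one_right numeral_le_iff semiring_norm(69) zero_less_numeral one_le_numeral)
  then have "2 / (2 ^ k * real n) \<le> 2 / (2 * real n)"
    using assms by (intro divide_left_mono mult_right_mono) auto
  then show ?thesis using assms by simp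
qed

lemma ytop_le:
  assumes "1 \<le> n" "2 ^ k * n \<le> i"
  shows "1 + 1 / real n - 2 / (2 ^ k * real n) + 1 / real i \<le> 1 + 1 / real n - 1 / (2 ^ k * real n)"
proof -
  have "real (2 ^ k * n) \<le> real i" using assms by linarith
  moreover have "0 < 2 ^ k * real n" using assms by simp
  ultimately have "1 / real i \<le> 1 / (2 ^ k * real n)"
    by (intro divide_left_mono) auto
  then show ?thesis by simp
qed

lemma col0_sub:
  assumes "1 \<le> n" "n \<le> i" "i < 2 * n"
  shows "P_rect i (newpos n i) (newrot n i) \<subseteq> cbox (1, 0) (1 + 1 / real n, ln 2)"
proof -
  have "1 / real i \<le> 1 / real n" using assms by (intro divide_left_mono) auto
  moreover have "Hs n (Suc i) \<le> ln 2" using assms by (intro Hs_le_ln2) auto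
  ultimately show ?thesis using assms
    by (simp add: rect_col0 cbox_sub Hs_nonneg)
qed

lemma lev_sub:
  assumes "1 \<le> n" "2 * n \<le> i"
  shows "P_rect i (newpos n i) (newrot n i) \<subseteq> cbox (0, 1) (ln 2, 1 + 1 / real n)"
proof -
  note L = lev_props[OF assms]
  have "Hs (2 ^ lev n i * n) (Suc i) \<le> ln 2" using L assms by (intro Hs_le_ln2) auto
  moreover have "1 \<le> 1 + 1 / real n - 2 / (2 ^ lev n i * real n)" using L assms y_ge1 by auto
  moreover have "1 + 1 / real n - 2 / (2 ^ lev n i * real n) + 1 / real i \<le> 1 + 1 / real n"
  proof -
    have "0 \<le> 1 / (2 ^ lev n i * real n)" by simp
    then show ?thesis using ytop_le[OF assms(1) L(2)] by linarith
  qed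
  ultimately show ?thesis using assms
    by (simp add: rect_lev cbox_sub Hs_nonneg)
qed

lemma new_new_disj:
  assumes "1 \<le> n" "n \<le> i" "i < j"
  shows "interior (P_rect i (newpos n i) (newrot n i)) \<inter> interior (P_rect j (newpos n j) (newrot n j)) = {}"
proof (cases "j < 2 * n")
  case True
  have "Hs n (Suc i) \<le> Hs n j" using assms by (intro Hs_mono) auto
  then show ?thesis using assms True by (simp add: rect_col0, intro box_disj', auto)
next
  case jn: False
  show ?thesis
  proof (cases "i < 2 * n")
    case True
    have "Hs (2 ^ lev n j * n) (Suc j) \<le> ln 2" using lev_props[of n j] assms jn by (intro Hs_le_ln2) auto
    then have "Hs (2 ^ lev n j * n) (Suc j) \<le> 1" using ln_2_less_1 by linarith
    then show ?thesis using assms True jn by (simp add: rect_col0 rect_lev, intro box_disj', auto)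
  next
    case iN: False
    show ?thesis
    proof (cases "lev n i = lev n j")
      case True
      have "Hs (2 ^ lev n i * n) (Suc i) \<le> Hs (2 ^ lev n i * n) j" using assms by (intro Hs_mono) auto
      then show ?thesis using assms iN jn True by (simp add: rect_lev, intro box_disj', auto)
    next
      case False
      have gen: "1 + 1 / real n - 2 / (2 ^ k * real n) + 1 / real a \<le> 1 + 1 / real n - 2 / (2 ^ k' * real n)"
        if "k < k'" "2 ^ k * n \<le> a" for k k' a
      proof -
        have "(2::real) ^ (k + 1) \<le> 2 ^ k'" using that by (intro power_increasing) auto
        then have "2 / (2 ^ k' * real n) \<le> 2 / (2 ^ (k + 1) * real n)"
          using assms by (intro divide_left_mono mult_right_mono) auto
        also have "\<dots> = 1 / (2 ^ k * real n)" by simp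
        finally show ?thesis using ytop_le[OF assms(1) that(2)] by simp
      qed
      have "lev n i < lev n j \<or> lev n j < lev n i" using False by arith
      then show ?thesis
      proof
        assume "lev n i < lev n j"
        from gen[OF this lev_props(2)[of n i]] show ?thesis using assms iN jn
          by (simp add: rect_lev, intro box_disj', auto)
      next
        assume "lev n j < lev n i"
        from gen[OF this lev_props(2)[of n j]] show ?thesis using assms iN jn
          by (simp add: rect_lev, intro box_disj', auto)
      qed
    qed
  qed
qed

theorem theorem1:
  fixes n :: nat
  assumes "n \<ge> 1000"
    and "packable {1..n-1} (square 1)"
  shows "\<exists>pos rot. packs {1..} (square (1 + 1 / real n)) pos rot \<and>
           (\<exists>S. finite S \<and> (\<forall>B\<in>S. \<exists>a b. B = cbox a b) \<and>
                \<Union>S \<subseteq> square (1 + 1 / real n) \<and>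
                (\<forall>i\<ge>1. P_rect i (pos i) (rot i) \<subseteq> square 1 \<union> \<Union>S) \<and>
                measure lebesgue (square 1 \<union> \<Union>S)
                  < 1 + 2 / real n * (ln 2 + 1 / (2 * real n)))"
proof -
  have n1: "1 \<le> n" using assms(1) by simp
  obtain pos0 rot0 where P0: "packs {1..n-1} (square 1) pos0 rot0"
    using assms(2) unfolding packable_def by blast
  define pos where "pos i = (if i < n then pos0 i else newpos n i)" for i
  define rot where "rot i = (if i < n then rot0 i else newrot n i)" for i
  define B0 where "B0 = cbox (1::real, 0::real) (1 + 1 / real n, ln 2)"
  define B1 where "B1 = cbox (0::real, 1::real) (ln 2, 1 + 1 / real n)"
  define s where "s = 1 + 1 / real n"
  have ln2: "0 < ln (2::real)" "ln (2::real) < 1" using ln_2_less_1 by auto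
  have "0 \<le> 1 / real n" by simp
  then have ln2s: "ln (2::real) \<le> 1 + 1 / real n" using ln2 by linarith
  have sq1s: "square 1 \<subseteq> square s"
    unfolding square_def s_def by (rule cbox_sub) auto
  have B0s: "B0 \<subseteq> square s"
    unfolding square_def s_def B0_def using ln2 ln2s by (intro cbox_sub) auto
  have B1s: "B1 \<subseteq> square s"
    unfolding square_def s_def B1_def using ln2 ln2s by (intro cbox_sub) auto
  have old: "P_rect i (pos i) (rot i) \<subseteq> square 1" if "1 \<le> i" "i < n" for i
    using P0 that unfolding packs_def pos_def rot_def by auto
  have new: "P_rect i (pos i) (rot i) \<subseteq> B0 \<union> B1" if "n \<le> i" for i
  proof (cases "i < 2 * n")
    case True
    then show ?thesis using col0_sub[OF n1 that True] that unfolding pos_def rot_def B0_def by auto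
  next
    case False
    then have "2 * n \<le> i" by simp
    then have "P_rect i (newpos n i) (newrot n i) \<subseteq> B1" unfolding B1_def by (rule lev_sub[OF n1])
    then show ?thesis using that unfolding pos_def rot_def by auto
  qed
  have new_far: "interior (square 1) \<inter> interior (P_rect i (pos i) (rot i)) = {}" if "n \<le> i" for i
  proof (cases "i < 2 * n")
    case True
    then show ?thesis using that unfolding pos_def rot_def square_def
      by (simp add: rect_col0, intro box_disj', auto)
  next
    case False
    have "1 \<le> 1 + 1 / real n - 2 / (2 ^ lev n i * real n)"
      using lev_props[OF n1] False y_ge1[OF n1] by auto
    then show ?thesis using that False unfolding pos_def rot_def square_def
      by (simp add: rect_lev, intro box_disj', auto)
  qed
  have disj: "interior (P_rect i (pos i) (rot i)) \<inter> interior (P_rect j (pos j) (rot j)) = {}"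
    if "1 \<le> i" "i < j" for i j
  proof (cases "j < n")
    case True
    then show ?thesis using P0 that unfolding packs_def pos_def rot_def by auto
  next
    case jn: False
    show ?thesis
    proof (cases "i < n")
      case True
      have "interior (P_rect i (pos i) (rot i)) \<subseteq> interior (square 1)"
        using old[OF that(1) True] by (rule interior_mono)
      then show ?thesis using new_far[of j] jn by auto
    next
      case False
      then show ?thesis using new_new_disj[OF n1, of i j] that jn unfolding pos_def rot_def by auto
    qed
  qed
  have packs: "packs {1..} (square s) pos rot"
    unfolding packs_def
  proof (intro conjI ballI impI)
    fix i assume i: "i \<in> {1::nat..}"
    show "P_rect i (pos i) (rot i) \<subseteq> square s"
    proof (cases "i < n")
      case True then show ?thesis using old[of i] i sq1s by auto
    next
      case False then show ?thesis using new[of i] B0s B1s by auto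
    qed
  next
    fix i j assume i: "i \<in> {1::nat..}" and j: "j \<in> {1::nat..}" and ij: "i \<noteq> j"
    show "interior (P_rect i (pos i) (rot i)) \<inter> interior (P_rect j (pos j) (rot j)) = {}"
    proof (cases "i < j")
      case True then show ?thesis using disj i by auto
    next
      case False
      then have "j < i" using ij by auto
      then show ?thesis using disj[of j i] j by auto
    qed
  qed
  have meas: "measure lebesgue (square 1 \<union> \<Union>{B0, B1}) \<le> 1 + ln 2 / real n + ln 2 / real n"
  proof -
    have m1: "measure lebesgue (square 1) = 1"
      unfolding square_def by (simp add: measure_completion content_Pair)
    have m0: "measure lebesgue B0 = ln 2 / real n"
      unfolding B0_def using ln2 by (simp add: measure_completion content_Pair)
    have m2: "measure lebesgue B1 = ln 2 / real n"
      unfolding B1_def using ln2 by (simp add: measure_completion content_Pair)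
    have "measure lebesgue (square 1 \<union> \<Union>{B0, B1}) = measure lebesgue (square 1 \<union> (B0 \<union> B1))"
      by simp
    also have "\<dots> \<le> measure lebesgue (square 1) + measure lebesgue (B0 \<union> B1)"
      unfolding square_def B0_def B1_def by (intro measure_Un_le) auto
    also have "measure lebesgue (B0 \<union> B1) \<le> measure lebesgue B0 + measure lebesgue B1"
      unfolding B0_def B1_def by (intro measure_Un_le) auto
    finally show ?thesis using m1 m0 m2 by simp
  qed
  have "1 + ln 2 / real n + ln 2 / real n < 1 + 2 / real n * (ln 2 + 1 / (2 * real n))"
    using n1 by (simp add: field_simps)
  with meas have mlt: "measure lebesgue (square 1 \<union> \<Union>{B0, B1}) < 1 + 2 / real n * (ln 2 + 1 / (2 * real n))"
    by linarith
  show ?thesis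
  proof (intro exI conjI)
    show "packs {1..} (square (1 + 1 / real n)) pos rot" using packs s_def by simp
    show "finite {B0, B1}" by simp
    show "\<forall>B\<in>{B0, B1}. \<exists>a b. B = cbox a b" unfolding B0_def B1_def by blast
    show "\<Union>{B0, B1} \<subseteq> square (1 + 1 / real n)" using B0s B1s s_def by simp
    show "\<forall>i\<ge>1. P_rect i (pos i) (rot i) \<subseteq> square 1 \<union> \<Union>{B0, B1}"
    proof (intro allI impI)
      fix i :: nat assume "1 \<le> i"
      then show "P_rect i (pos i) (rot i) \<subseteq> square 1 \<union> \<Union>{B0, B1}"
        using old[of i] new[of i] by (cases "i < n") auto
    qed
    show "measure lebesgue (square 1 \<union> \<Union>{B0, B1}) < 1 + 2 / real n * (ln 2 + 1 / (2 * real n))"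
      by (rule mlt)
  qed
qed

end
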